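(* Let $f:\mathbb{N}\to(0,\infty)$ be a function such that both $f$ and $1/f$ (the function $n\mapsto f(n)^{-1}$) are weakly super-multiplicative. Suppose $f$ has a normal order $g:(0,\infty)\to(0,\infty)$ which is monotonic or $\log$-uniformly continuous. Then there exists a constant $c\in\mathbb{R}$ such that $f(n)=n^c$ for all $n\in\mathbb{N}$.
   Context: A function $f:\mathbb{N}\to[0,\infty)$ is weakly super-multiplicative if for all $n\in\mathbb{N}$ and all $\epsilon>0$ there exist $x_0>0$ and $\delta>0$ such that for all real $x>x_0$, $\#\{m\in\mathbb{N}\cap[x,(1+\epsilon)x]: f(nm)\ge(1-\epsilon)f(n)f(m)\}\ge\delta x$. A function $f:\mathbb{N}\to[0,\infty)$ has normal order $g$ if for every $\epsilon>0$ the set $\{n\in\mathbb{N}: |f(n)-g(n)|\ge\epsilon g(n)\}$ has upper (natural) density $0$. A function $g:(0,\infty)\to(0,\infty)$ is $\log$-uniformly continuous if for every $\epsilon>0$ there is $\delta>0$ such that for all $x,y>0$ with $|x/y-1|<\delta$ we have $|g(x)/g(y)-1|<\epsilon$. *)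

theory Defs
  imports "HOL-Analysis.Analysis" "HOL-Library.Liminf_Limsup"
begin

text \<open>Natural numbers are the positive integers {1,2,...}; values of functions at 0 are irrelevant.\<close>

definition weakly_supermult :: "(nat \<Rightarrow> real) \<Rightarrow> bool" where
  "weakly_supermult f \<longleftrightarrow>
     (\<forall>n::nat. n \<ge> 1 \<longrightarrow> (\<forall>\<epsilon>::real. \<epsilon> > 0 \<longrightarrow>
        (\<exists>x0::real. \<exists>\<delta>::real. x0 > 0 \<and> \<delta> > 0 \<and>
           (\<forall>x::real. x > x0 \<longrightarrow>
              real (card {m::nat. m \<ge> 1 \<and> x \<le> real m \<and> real m \<le> (1 + \<epsilon>) * x \<and>
                                  f (n * m) \<ge> (1 - \<epsilon>) * f n * f m}) \<ge> \<delta> * x))))"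

definition upper_density :: "nat set \<Rightarrow> ereal" where
  "upper_density S = limsup (\<lambda>N. ereal (real (card (S \<inter> {1..N})) / real N))"

definition has_normal_order :: "(nat \<Rightarrow> real) \<Rightarrow> (real \<Rightarrow> real) \<Rightarrow> bool" where
  "has_normal_order f g \<longleftrightarrow>
     (\<forall>\<epsilon>::real. \<epsilon> > 0 \<longrightarrow>
        upper_density {n::nat. n \<ge> 1 \<and> \<bar>f n - g (real n)\<bar> \<ge> \<epsilon> * g (real n)} = 0)"

definition log_unif_cont :: "(real \<Rightarrow> real) \<Rightarrow> bool" where
  "log_unif_cont g \<longleftrightarrow>
     (\<forall>\<epsilon>::real. \<epsilon> > 0 \<longrightarrow> (\<exists>\<delta>::real. \<delta> > 0 \<and>
        (\<forall>x y::real. x > 0 \<longrightarrow> y > 0 \<longrightarrow> \<bar>x / y - 1\<bar> < \<delta> \<longrightarrow> \<bar>g x / g y - 1\<bar> < \<epsilon>)))"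

end

theory Submission
  imports Defs
begin


lemma density_ev:
  assumes "has_normal_order f g" "\<theta> > 0" "\<eta> > 0"
  shows "eventually (\<lambda>N. real (card ({n::nat. n \<ge> 1 \<and> \<bar>f n - g (real n)\<bar> \<ge> \<theta> * g (real n)} \<inter> {1..N})) < \<eta> * real N) sequentially"
proof -
  let ?E = "{n::nat. n \<ge> 1 \<and> \<bar>f n - g (real n)\<bar> \<ge> \<theta> * g (real n)}"
  have "upper_density ?E = 0" using assms unfolding has_normal_order_def by blast
  hence "limsup (\<lambda>N. ereal (real (card (?E \<inter> {1..N})) / real N)) < ereal \<eta>"
    using assms(3) unfolding upper_density_def by simp
  from Limsup_lessD[OF this] have "eventually (\<lambda>N. ereal (real (card (?E \<inter> {1..N})) / real N) < ereal \<eta>) sequentially" .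
  moreover have "eventually (\<lambda>N::nat. N \<ge> 1) sequentially" by (rule eventually_ge_at_top)
  ultimately show ?thesis
  proof (rule eventually_elim2)
    fix N :: nat assume a: "ereal (real (card (?E \<inter> {1..N})) / real N) < ereal \<eta>" and b: "N \<ge> 1"
    hence "real (card (?E \<inter> {1..N})) / real N < \<eta>" by simp
    with b show "real (card (?E \<inter> {1..N})) < \<eta> * real N" by (simp add: divide_less_eq mult.commute)
  qed
qed




lemma exists_good:
  fixes h :: "nat \<Rightarrow> real" and E :: "nat set"
  assumes wsm: "weakly_supermult h" and n: "n \<ge> 1" and th: "\<theta> > 0"
    and dens: "\<And>\<eta>. \<eta> > 0 \<Longrightarrow> eventually (\<lambda>N. real (card (E \<inter> {1..N})) < \<eta> * real N) sequentially"
  shows "\<exists>X0. \<forall>x \<ge> X0. \<exists>m::nat. m \<ge> 1 \<and> x \<le> real m \<and> real m \<le> (1+\<theta>) * x \<and>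
            h (n*m) \<ge> (1-\<theta>) * h n * h m \<and> m \<notin> E \<and> n*m \<notin> E"
proof -
  obtain x0 \<delta> where x0: "x0 > 0" and dl: "\<delta> > 0" and
    cnt: "\<And>x. x > x0 \<Longrightarrow> real (card {m::nat. m \<ge> 1 \<and> x \<le> real m \<and> real m \<le> (1 + \<theta>) * x \<and>
                                  h (n * m) \<ge> (1 - \<theta>) * h n * h m}) \<ge> \<delta> * x"
    using wsm n th unfolding weakly_supermult_def by blast
  define \<eta> where "\<eta> = \<delta> / (2 * (real n + 1) * (1+\<theta>))"
  have eta: "\<eta> > 0" using dl th unfolding \<eta>_def by simp
  obtain N0 where N0: "\<And>N. N \<ge> N0 \<Longrightarrow> real (card (E \<inter> {1..N})) < \<eta> * real N"
    using dens[OF eta] unfolding eventually_sequentially by blast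
  show ?thesis
  proof (rule exI[of _ "max (x0+1) (real N0 + 1)"], intro allI impI)
    fix x :: real assume xX: "x \<ge> max (x0+1) (real N0 + 1)"
    hence xpos: "x > 0" and xx0: "x > x0" and xN0: "x \<ge> real N0 + 1" using x0 by auto
    define S where "S = {m::nat. m \<ge> 1 \<and> x \<le> real m \<and> real m \<le> (1 + \<theta>) * x \<and>
                                  h (n * m) \<ge> (1 - \<theta>) * h n * h m}"
    have cS: "real (card S) \<ge> \<delta> * x" using cnt[OF xx0] unfolding S_def .
    define N where "N = nat \<lfloor>(1+\<theta>)*x\<rfloor>"
    have NN: "real N \<le> (1+\<theta>)*x" "real N > (1+\<theta>)*x - 1" using xpos th unfolding N_def
      by (simp_all add: of_nat_nat)
    have NgeN0: "N \<ge> N0" using NN(2) xN0 th xpos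
      by (smt (verit, ccfv_threshold) mult_le_cancel_right1 of_nat_le_iff)
    have SN: "S \<subseteq> {1..N}"
    proof
      fix m assume "m \<in> S"
      hence "m \<ge> 1" "real m \<le> (1+\<theta>)*x" unfolding S_def by auto
      hence "int m \<le> \<lfloor>(1+\<theta>)*x\<rfloor>" by (simp add: le_floor_iff)
      thus "m \<in> {1..N}" using \<open>m \<ge> 1\<close> unfolding N_def by auto
    qed
    have finS: "finite S" using SN finite_subset by blast
    define B1 where "B1 = {m\<in>S. m \<in> E}"
    define B2 where "B2 = {m\<in>S. n*m \<in> E}"
    have "B1 \<subseteq> E \<inter> {1..N}" using SN unfolding B1_def by auto
    hence cB1: "card B1 \<le> card (E \<inter> {1..N})" by (intro card_mono) auto
    have "(\<lambda>m. n*m) ` B2 \<subseteq> E \<inter> {1..n*N}" using SN n unfolding B2_def by auto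
    hence "card ((\<lambda>m. n*m) ` B2) \<le> card (E \<inter> {1..n*N})" by (intro card_mono) auto
    moreover have "inj_on (\<lambda>m. n*m) B2" using n by (auto simp: inj_on_def)
    ultimately have cB2: "card B2 \<le> card (E \<inter> {1..n*N})" by (simp add: card_image)
    have e1: "real (card (E \<inter> {1..N})) < \<eta> * real N" using N0 NgeN0 by blast
    have "n*N \<ge> N" using n by simp
    hence e2: "real (card (E \<inter> {1..n*N})) < \<eta> * real (n*N)" using N0 NgeN0 by (meson le_trans)
    have "card (B1 \<union> B2) \<le> card B1 + card B2" by (rule card_Un_le)
    hence "real (card (B1 \<union> B2)) < \<eta> * real N + \<eta> * real (n*N)"
      using cB1 cB2 e1 e2 by linarith
    also have "\<dots> = \<eta> * (real n + 1) * real N" by (simp add: algebra_simps)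
    also have "\<dots> \<le> \<eta> * (real n + 1) * ((1+\<theta>)*x)"
      using NN(1) eta by (intro mult_left_mono) auto
    also have "\<dots> = \<delta> * x / 2"
    proof -
      define D where "D = (real n + 1) * (1+\<theta>)"
      have d: "D > 0" using th unfolding D_def by simp
      have "\<eta> = \<delta> / (2*D)" unfolding \<eta>_def D_def by (simp add: mult.assoc)
      hence ea: "\<eta> * D = \<delta> / 2" using d by simp
      have eb: "\<eta> * (real n + 1) * ((1+\<theta>)*x) = (\<eta> * D) * x" unfolding D_def by (simp add: algebra_simps)
      show ?thesis unfolding eb ea by simp
    qed
    also have "\<dots> < \<delta> * x" using dl xpos by simp
    finally have "card (B1 \<union> B2) < card S" using cS by linarith
    have "\<not> S \<subseteq> B1 \<union> B2"
    proof
      assume "S \<subseteq> B1 \<union> B2"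
      moreover have "finite (B1 \<union> B2)" using finS unfolding B1_def B2_def by auto
      ultimately have "card S \<le> card (B1 \<union> B2)" by (simp add: card_mono)
      thus False using \<open>card (B1 \<union> B2) < card S\<close> by linarith
    qed
    then obtain m where "m \<in> S" "m \<notin> B1" "m \<notin> B2" by blast
    thus "\<exists>m::nat. m \<ge> 1 \<and> x \<le> real m \<and> real m \<le> (1+\<theta>) * x \<and>
            h (n*m) \<ge> (1-\<theta>) * h n * h m \<and> m \<notin> E \<and> n*m \<notin> E"
      unfolding S_def B1_def B2_def by blast
  qed
qed




lemma aux_lin: fixes e u v::real assumes "u \<le> e/2" "0 \<le> v" "0<e"
 shows "e / 8 + (e + u) / 4 \<le> e + (u + v) / 64"
  using assms by (simp add: field_simps)

lemma Kboth:
  assumes fpos: "\<forall>n::nat. n \<ge> 1 \<longrightarrow> f n > 0"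
    and gpos: "\<forall>x::real. x > 0 \<longrightarrow> g x > 0"
    and normal: "has_normal_order f g"
    and wsm: "weakly_supermult f"
    and wsm_inv: "weakly_supermult (\<lambda>n. 1 / f n)"
    and n: "n \<ge> 1" and e: "0 < \<epsilon>" "\<epsilon> < 1/2"
  shows "\<exists>X0. \<forall>x\<ge>X0. \<exists>m::nat. m \<ge> 1 \<and> x \<le> real m \<and> real m \<le> (1+\<epsilon>)*x \<and>
            g (real n * real m) \<ge> (1-\<epsilon>) * f n * g (real m)"
    and "\<exists>X0. \<forall>x\<ge>X0. \<exists>m::nat. m \<ge> 1 \<and> x \<le> real m \<and> real m \<le> (1+\<epsilon>)*x \<and>
            g (real n * real m) \<le> (1+\<epsilon>) * f n * g (real m)"
proof -
  define \<theta> where "\<theta> = \<epsilon>/8"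
  have th: "\<theta> > 0" "\<theta> < 1/16" "\<theta> \<le> \<epsilon>" using e unfolding \<theta>_def by auto
  define E where "E = {n::nat. n \<ge> 1 \<and> \<bar>f n - g (real n)\<bar> \<ge> \<theta> * g (real n)}"
  have dens: "\<And>\<eta>. \<eta> > 0 \<Longrightarrow> eventually (\<lambda>N. real (card (E \<inter> {1..N})) < \<eta> * real N) sequentially"
    unfolding E_def using density_ev[OF normal th(1)] by blast
  have fn: "f n > 0" using fpos n by auto
  have notE: "\<bar>f k - g (real k)\<bar> < \<theta> * g (real k)" if "k \<ge> 1" "k \<notin> E" for k
    using that unfolding E_def by auto
  have gk: "g (real k) > 0" if "k \<ge> 1" for k::nat using gpos that by auto
  have fk: "f k > 0" if "k \<ge> 1" for k::nat using fpos that by auto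
  show "\<exists>X0. \<forall>x\<ge>X0. \<exists>m::nat. m \<ge> 1 \<and> x \<le> real m \<and> real m \<le> (1+\<epsilon>)*x \<and>
            g (real n * real m) \<ge> (1-\<epsilon>) * f n * g (real m)"
  proof -
    obtain X0 where X0: "\<And>x. x \<ge> X0 \<Longrightarrow> \<exists>m::nat. m \<ge> 1 \<and> x \<le> real m \<and> real m \<le> (1+\<theta>) * x \<and>
            f (n*m) \<ge> (1-\<theta>) * f n * f m \<and> m \<notin> E \<and> n*m \<notin> E"
      using exists_good[OF wsm n th(1) dens] by blast
    show ?thesis
    proof (rule exI[of _ "max X0 0"], intro allI impI)
      fix x assume x: "max X0 0 \<le> x"
      then obtain m where m: "m \<ge> 1" "x \<le> real m" "real m \<le> (1+\<theta>) * x"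
        "f (n*m) \<ge> (1-\<theta>) * f n * f m" "m \<notin> E" "n*m \<notin> E" using X0 by fastforce
      have nm: "n*m \<ge> 1" using n m(1) by simp
      have a1: "\<bar>f m - g (real m)\<bar> < \<theta> * g (real m)" using notE m by auto
      have a2: "\<bar>f (n*m) - g (real n * real m)\<bar> < \<theta> * g (real n * real m)"
        using notE[OF nm m(6)] by simp
      have gm: "g (real m) > 0" using gk m by auto
      have gnm: "g (real n * real m) > 0" using gk[OF nm] by simp
      have b1: "f m > (1-\<theta>) * g (real m)" using a1 by (simp add: algebra_simps abs_less_iff)
      have b2: "f (n*m) < (1+\<theta>) * g (real n * real m)" using a2 by (simp add: algebra_simps abs_less_iff)
      have "(1-\<theta>) * f n * f m \<ge> (1-\<theta>) * f n * ((1-\<theta>) * g (real m))"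
        using b1 fn th by (intro mult_left_mono) auto
      hence "(1+\<theta>) * g (real n * real m) > (1-\<theta>)^2 * f n * g (real m)"
        using b2 m(4) by (simp add: power2_eq_square algebra_simps)
      moreover have "(1-\<theta>)^2 * f n * g (real m) \<ge> (1+\<theta>) * ((1-\<epsilon>) * f n * g (real m))"
      proof -
        have "(1-\<theta>)^2 \<ge> (1+\<theta>) * (1-\<epsilon>)" using th e unfolding \<theta>_def by (simp add: power2_eq_square algebra_simps)
        hence "(1-\<theta>)^2 * (f n * g (real m)) \<ge> ((1+\<theta>) * (1-\<epsilon>)) * (f n * g (real m))"
          using fn gm by (intro mult_right_mono) auto
        thus ?thesis by (simp add: algebra_simps)
      qed
      ultimately have "(1+\<theta>) * g (real n * real m) > (1+\<theta>) * ((1-\<epsilon>) * f n * g (real m))" by linarith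
      hence "g (real n * real m) > (1-\<epsilon>) * f n * g (real m)" using th by simp
      moreover have "real m \<le> (1+\<epsilon>)*x" using m(3) th x
        by (smt (verit, ccfv_SIG) max.bounded_iff mult_right_mono)
      ultimately show "\<exists>m::nat. m \<ge> 1 \<and> x \<le> real m \<and> real m \<le> (1+\<epsilon>)*x \<and>
            g (real n * real m) \<ge> (1-\<epsilon>) * f n * g (real m)" using m by force
    qed
  qed
  show "\<exists>X0. \<forall>x\<ge>X0. \<exists>m::nat. m \<ge> 1 \<and> x \<le> real m \<and> real m \<le> (1+\<epsilon>)*x \<and>
            g (real n * real m) \<le> (1+\<epsilon>) * f n * g (real m)"
  proof -
    obtain X0 where X0: "\<And>x. x \<ge> X0 \<Longrightarrow> \<exists>m::nat. m \<ge> 1 \<and> x \<le> real m \<and> real m \<le> (1+\<theta>) * x \<and>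
            1 / f (n*m) \<ge> (1-\<theta>) * (1 / f n) * (1 / f m) \<and> m \<notin> E \<and> n*m \<notin> E"
      using exists_good[OF wsm_inv n th(1) dens] by blast
    show ?thesis
    proof (rule exI[of _ "max X0 0"], intro allI impI)
      fix x assume x: "max X0 0 \<le> x"
      then obtain m where m: "m \<ge> 1" "x \<le> real m" "real m \<le> (1+\<theta>) * x"
        "1 / f (n*m) \<ge> (1-\<theta>) * (1 / f n) * (1 / f m)" "m \<notin> E" "n*m \<notin> E" using X0 by fastforce
      have nm: "n*m \<ge> 1" using n m(1) by simp
      have a1: "\<bar>f m - g (real m)\<bar> < \<theta> * g (real m)" using notE m by auto
      have a2: "\<bar>f (n*m) - g (real n * real m)\<bar> < \<theta> * g (real n * real m)"
        using notE[OF nm m(6)] by simp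
      have gm: "g (real m) > 0" using gk m by auto
      have fm: "f m > 0" using fk m by auto
      have fnm: "f (n*m) > 0" using fk nm by auto
      have b1: "f m < (1+\<theta>) * g (real m)" using a1 by (simp add: algebra_simps abs_less_iff)
      have b2: "f (n*m) > (1-\<theta>) * g (real n * real m)" using a2 by (simp add: algebra_simps abs_less_iff)
      have b3: "(1-\<theta>) * f (n*m) \<le> f n * f m"
      proof -
        have "(1-\<theta>) / (f n * f m) \<le> 1 / f (n*m)" using m(4) by simp
        thus ?thesis using fn fm fnm by (simp add: field_simps)
      qed
      have "f n * f m \<le> f n * ((1+\<theta>) * g (real m))" using b1 fn by (intro mult_left_mono) auto
      hence c: "(1-\<theta>)^2 * g (real n * real m) < (1+\<theta>) * f n * g (real m)"
      proof -
        have "(1-\<theta>) * ((1-\<theta>) * g (real n * real m)) < (1-\<theta>) * f (n*m)"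
          using b2 th by (intro mult_strict_left_mono) auto
        thus ?thesis using b3 \<open>f n * f m \<le> f n * ((1+\<theta>) * g (real m))\<close>
          by (simp add: power2_eq_square algebra_simps)
      qed
      have "(1+\<theta>) * f n * g (real m) \<le> (1-\<theta>)^2 * ((1+\<epsilon>) * f n * g (real m))"
      proof -
        have q1: "\<epsilon>*\<epsilon> \<le> \<epsilon>/2" using e mult_left_mono[of \<epsilon> "1/2" \<epsilon>] by simp
        have q2: "0 \<le> \<epsilon>*(\<epsilon>*\<epsilon>)" using e by simp
        have "(1+\<theta>) \<le> (1-\<theta>)^2 * (1+\<epsilon>)" unfolding \<theta>_def power2_eq_square by (simp add: algebra_simps) (rule aux_lin[OF q1 q2 e(1)])
        hence "(1+\<theta>) * (f n * g (real m)) \<le> ((1-\<theta>)^2 * (1+\<epsilon>)) * (f n * g (real m))"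
          using fn gm by (intro mult_right_mono) auto
        thus ?thesis by (simp add: algebra_simps)
      qed
      with c have "(1-\<theta>)^2 * g (real n * real m) < (1-\<theta>)^2 * ((1+\<epsilon>) * f n * g (real m))" by linarith
      hence "g (real n * real m) < (1+\<epsilon>) * f n * g (real m)" using th by simp
      moreover have "real m \<le> (1+\<epsilon>)*x" using m(3) th x
        by (smt (verit, ccfv_SIG) max.bounded_iff mult_right_mono)
      ultimately show "\<exists>m::nat. m \<ge> 1 \<and> x \<le> real m \<and> real m \<le> (1+\<epsilon>)*x \<and>
            g (real n * real m) \<le> (1+\<epsilon>) * f n * g (real m)" using m by force
    qed
  qed
qed




lemma ratio_lemma:
  fixes A B Ls Lr cz cc :: real
  assumes Ls: "Ls > 0" and Lr: "Lr > 0"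
    and h: "\<And>J::nat. \<exists>K::nat. \<bar>real K * Ls - real J * Lr\<bar> \<le> cc \<and> real K * A \<le> real J * B + cz"
  shows "A / Ls \<le> B / Lr"
proof -
  define C where "C = cz + cc * \<bar>A\<bar> / Ls"
  have bnd: "real J * (Lr * A / Ls - B) \<le> C" for J :: nat
  proof -
    obtain K :: nat where K: "\<bar>real K * Ls - real J * Lr\<bar> \<le> cc" "real K * A \<le> real J * B + cz"
      using h by blast
    define t where "t = real K * Ls - real J * Lr"
    have Kt: "real K = (real J * Lr + t) / Ls" using Ls unfolding t_def by (simp add: field_simps)
    have "real K * A = real J * (Lr * A / Ls) + t * A / Ls" unfolding Kt using Ls by (simp add: field_simps)
    moreover have "t * A / Ls \<ge> - (cc * \<bar>A\<bar> / Ls)"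
    proof -
      have "\<bar>t * A\<bar> \<le> cc * \<bar>A\<bar>" using K(1) unfolding t_def abs_mult by (intro mult_right_mono) auto
      hence "t * A \<ge> - (cc * \<bar>A\<bar>)" by linarith
      thus ?thesis using Ls by (simp add: divide_right_mono[of _ _ Ls, simplified] minus_divide_left[symmetric] le_divide_eq)
    qed
    ultimately have "real J * (Lr * A / Ls) - cc * \<bar>A\<bar> / Ls \<le> real J * B + cz" using K(2) by linarith
    thus ?thesis unfolding C_def by (simp add: algebra_simps)
  qed
  have "Lr * A / Ls - B \<le> 0"
  proof (rule ccontr)
    assume "\<not> Lr * A / Ls - B \<le> 0"
    hence D: "Lr * A / Ls - B > 0" by simp
    obtain J :: nat where "C / (Lr * A / Ls - B) < real J" using reals_Archimedean2 by blast
    hence "C < real J * (Lr * A / Ls - B)" using D by (simp add: divide_less_eq)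
    with bnd[of J] show False by linarith
  qed
  hence "Lr * A / Ls \<le> B" by simp
  hence "A / Ls * Lr \<le> B" by (simp add: mult.commute)
  thus ?thesis using Lr by (simp add: le_divide_eq)
qed

lemma iter_up:
  fixes g :: "real \<Rightarrow> real"
  assumes up: "\<forall>y\<ge>Y. g (s*y) \<ge> a * g y" and s: "s \<ge> 1" and a: "a \<ge> 0" and y0: "y0 \<ge> Y" "y0 \<ge> 0"
  shows "g (s^K * y0) \<ge> a^K * g y0"
proof (induction K)
  case 0 thus ?case by simp
next
  case (Suc K)
  have "s^K * y0 \<ge> y0" using s y0 by (simp add: mult_le_cancel_right1 one_le_power)
  hence "g (s * (s^K * y0)) \<ge> a * g (s^K * y0)" using up y0 by auto
  moreover have "a * g (s^K * y0) \<ge> a * (a^K * g y0)" using Suc a by (intro mult_left_mono) auto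
  ultimately show ?case by (simp add: mult.assoc)
qed

lemma iter_dn:
  fixes g :: "real \<Rightarrow> real"
  assumes dn: "\<forall>y\<ge>Y. g (s*y) \<le> b * g y" and s: "s \<ge> 1" and b: "b \<ge> 0" and y0: "y0 \<ge> Y" "y0 \<ge> 0"
  shows "g (s^K * y0) \<le> b^K * g y0"
proof (induction K)
  case 0 thus ?case by simp
next
  case (Suc K)
  have "s^K * y0 \<ge> y0" using s y0 by (simp add: mult_le_cancel_right1 one_le_power)
  hence "g (s * (s^K * y0)) \<le> b * g (s^K * y0)" using dn y0 by auto
  moreover have "b * g (s^K * y0) \<le> b * (b^K * g y0)" using Suc b by (intro mult_left_mono) auto
  ultimately show ?case by (simp add: mult.assoc)
qed

lemma chain_compare:
  fixes g :: "real \<Rightarrow> real"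
  assumes Y: "Y > 0" and gpos: "\<forall>x::real. x > 0 \<longrightarrow> g x > 0"
    and s: "s > 1" and r: "r > 1" and a: "a > 0" and b: "b > 0" and M: "M > 0"
    and up: "\<forall>y\<ge>Y. g (s*y) \<ge> a * g y" and dn: "\<forall>y\<ge>Y. g (r*y) \<le> b * g y"
    and cmp: "\<And>J::nat. \<exists>K::nat. \<bar>real K * ln s - real J * ln r\<bar> \<le> c1 \<and> g (s^K * Y) \<le> M * g (r^J * Y)"
  shows "ln a / ln s \<le> ln b / ln r"
proof (rule ratio_lemma[where cc = c1 and cz = "ln M"])
  show "ln s > 0" "ln r > 0" using s r by auto
  fix J :: nat
  obtain K :: nat where K: "\<bar>real K * ln s - real J * ln r\<bar> \<le> c1" "g (s^K * Y) \<le> M * g (r^J * Y)"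
    using cmp by blast
  have gY: "g Y > 0" using gpos Y by auto
  have "a^K * g Y \<le> g (s^K * Y)" using iter_up[OF up _ _ order_refl] s a Y by auto
  also have "\<dots> \<le> M * g (r^J * Y)" by (rule K(2))
  also have "\<dots> \<le> M * (b^J * g Y)" using iter_dn[OF dn _ _ order_refl] r b Y M
    by (intro mult_left_mono) auto
  finally have "a^K * g Y \<le> (M * b^J) * g Y" by (simp add: mult.assoc)
  hence "a^K \<le> M * b^J" using gY by simp
  hence "ln (a^K) \<le> ln (M * b^J)" using a b M by (subst ln_le_cancel_iff) auto
  hence "real K * ln a \<le> real J * ln b + ln M" using a b M by (simp add: ln_mult ln_realpow)
  thus "\<exists>K::nat. \<bar>real K * ln s - real J * ln r\<bar> \<le> c1 \<and> real K * ln a \<le> real J * ln b + ln M"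
    using K(1) by blast
qed

lemma uc_bound:
  fixes g :: "real \<Rightarrow> real"
  assumes uc: "log_unif_cont g" and gpos: "\<forall>x::real. x > 0 \<longrightarrow> g x > 0"
  shows "\<exists>M>0. \<forall>l y. 1 \<le> l \<longrightarrow> l \<le> L \<longrightarrow> y > 0 \<longrightarrow> g y \<le> M * g (l * y)"
proof -
  obtain \<delta> where d: "\<delta> > 0" and dh: "\<And>x y. x > 0 \<Longrightarrow> y > 0 \<Longrightarrow> \<bar>x / y - 1\<bar> < \<delta> \<Longrightarrow> \<bar>g x / g y - 1\<bar> < 1/2"
    using uc unfolding log_unif_cont_def by (metis less_divide_eq_numeral1(1) mult_eq_0_iff zero_less_one zero_neq_numeral)
  define q where "q = 1 + \<delta>/2"
  have q: "q > 1" using d unfolding q_def by simp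
  have step: "g y \<le> 2 * g (\<mu> * y)" if "1 \<le> \<mu>" "\<mu> \<le> q" "y > 0" for \<mu> y
  proof -
    have my: "\<mu> * y > 0" using that by simp
    have "\<bar>(\<mu>*y) / y - 1\<bar> < \<delta>" using that d unfolding q_def by simp
    hence "\<bar>g (\<mu>*y) / g y - 1\<bar> < 1/2" using dh my that(3) by blast
    hence "g (\<mu>*y) / g y > 1/2" by linarith
    moreover have "g y > 0" using gpos that by auto
    ultimately show ?thesis by (simp add: field_simps)
  qed
  have main: "\<forall>l y. 1 \<le> l \<longrightarrow> l \<le> q^i \<longrightarrow> y > 0 \<longrightarrow> g y \<le> 2^i * g (l * y)" for i :: nat
  proof (induction i)
    case 0 thus ?case by simp
  next
    case (Suc i)
    show ?case
    proof (intro allI impI)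
      fix l y :: real assume l1: "1 \<le> l" and l2: "l \<le> q^Suc i" and y: "y > 0"
      have gl: "g (l*y) > 0" using gpos l1 y by auto
      show "g y \<le> 2^Suc i * g (l * y)"
      proof (cases "l \<le> q")
        case True
        hence "g y \<le> 2 * g (l * y)" using step l1 y by blast
        moreover have "2 * g (l * y) \<le> 2^Suc i * g (l * y)" using gl
          by (intro mult_right_mono) (auto simp: one_le_power)
        ultimately show ?thesis by linarith
      next
        case False
        define lp where "lp = l / q"
        have "1 \<le> lp" using False q unfolding lp_def by simp
        moreover have "lp \<le> q^i" using l2 q unfolding lp_def by (simp add: divide_le_eq mult.commute)
        ultimately have "g y \<le> 2^i * g (lp * y)" using Suc y by blast
        moreover have "g (lp * y) \<le> 2 * g (q * (lp * y))" using step[of q "lp * y"] q y \<open>1 \<le> lp\<close> by simp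
        moreover have "q * (lp * y) = l * y" using q unfolding lp_def by simp
        ultimately have h1: "g y \<le> 2^i * g (lp * y)" and h2: "g (lp * y) \<le> 2 * g (l * y)" by auto
        have "2^i * g (lp * y) \<le> 2^i * (2 * g (l * y))" using h2 by (intro mult_left_mono) auto
        moreover have "2^Suc i * g (l*y) = 2^i*(2*g(l*y))" by simp
        ultimately show ?thesis using h1 by linarith
      qed
    qed
  qed
  obtain i :: nat where "L < q^i" using real_arch_pow[OF q] by blast
  hence "\<forall>l y. 1 \<le> l \<longrightarrow> l \<le> L \<longrightarrow> y > 0 \<longrightarrow> g y \<le> 2^i * g (l * y)" using main[of i] by force
  thus ?thesis by (intro exI[of _ "2^i"]) auto
qed

lemma limit_le:
  fixes P Q :: "real \<Rightarrow> real"
  assumes e0: "e0 > 0" and h: "\<And>\<epsilon>. 0 < \<epsilon> \<Longrightarrow> \<epsilon> < e0 \<Longrightarrow> P \<epsilon> \<le> Q \<epsilon>"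
    and P: "(P \<longlongrightarrow> p) (at_right 0)" and Q: "(Q \<longlongrightarrow> q) (at_right 0)"
  shows "p \<le> q"
proof (rule tendsto_le[OF _ Q P])
  show "at_right (0::real) \<noteq> bot" by simp
  show "eventually (\<lambda>e. P e \<le> Q e) (at_right 0)"
    unfolding eventually_at_right_field using e0 h by blast
qed




context
  fixes f :: "nat \<Rightarrow> real" and g :: "real \<Rightarrow> real"
  assumes fpos: "\<forall>n::nat. n \<ge> 1 \<longrightarrow> f n > 0"
    and wsm: "weakly_supermult f"
    and wsm_inv: "weakly_supermult (\<lambda>n. 1 / f n)"
    and gpos: "\<forall>x::real. x > 0 \<longrightarrow> g x > 0"
    and normal: "has_normal_order f g"
begin

lemma floor_facts:
  assumes "t \<ge> 0" "L > 0"
  shows "real (nat \<lfloor>t\<rfloor>) * L \<le> t * L" "t * L < real (nat \<lfloor>t\<rfloor>) * L + L"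
proof -
  have a: "real (nat \<lfloor>t\<rfloor>) = of_int \<lfloor>t\<rfloor>" using assms by simp
  have b: "of_int \<lfloor>t\<rfloor> \<le> t" "t < of_int \<lfloor>t\<rfloor> + 1" by linarith+
  show "real (nat \<lfloor>t\<rfloor>) * L \<le> t * L" unfolding a using b(1) assms by (intro mult_right_mono) auto
  have "t * L < (of_int \<lfloor>t\<rfloor> + 1) * L" using b(2) assms by (intro mult_strict_right_mono) auto
  thus "t * L < real (nat \<lfloor>t\<rfloor>) * L + L" unfolding a by (simp add: distrib_right)
qed

lemma case_mono:
  assumes gm: "mono_on {0<..} g" and n: "n \<ge> 2" and k: "k \<ge> 2"
  shows "ln (f n) / ln (real n) \<le> ln (f k) / ln (real k)"
proof -
  have gmono: "g x \<le> g y" if "0 < x" "x \<le> y" for x y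
    using mono_onD[OF gm] that by auto
  have fn: "f n > 0" and fk: "f k > 0" using fpos n k by auto
  have key: "ln ((1-\<epsilon>) * f n) / ln (real n * (1+\<epsilon>)) \<le> ln ((1+\<epsilon>) * f k) / ln (real k / (1+\<epsilon>))"
    if e: "0 < \<epsilon>" "\<epsilon> < 1/2" for \<epsilon>
  proof -
    obtain X1 where X1: "\<And>x. x \<ge> X1 \<Longrightarrow> \<exists>m::nat. m \<ge> 1 \<and> x \<le> real m \<and> real m \<le> (1+\<epsilon>)*x \<and>
            g (real n * real m) \<ge> (1-\<epsilon>) * f n * g (real m)"
      using Kboth(1)[OF fpos gpos normal wsm wsm_inv _ e, of n] n by auto
    obtain X2 where X2: "\<And>x. x \<ge> X2 \<Longrightarrow> \<exists>m::nat. m \<ge> 1 \<and> x \<le> real m \<and> real m \<le> (1+\<epsilon>)*x \<and>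
            g (real k * real m) \<le> (1+\<epsilon>) * f k * g (real m)"
      using Kboth(2)[OF fpos gpos normal wsm wsm_inv _ e, of k] k by auto
    define s where "s = real n * (1+\<epsilon>)"
    define r where "r = real k / (1+\<epsilon>)"
    define a where "a = (1-\<epsilon>) * f n"
    define b where "b = (1+\<epsilon>) * f k"
    define Y where "Y = max (max X1 1) ((1+\<epsilon>) * max X2 1)"
    have Y1: "Y \<ge> 1" unfolding Y_def by simp
    have s1: "s > 1"
    proof -
      have "real n \<ge> 2" using n by simp
      hence "real n * (1+\<epsilon>) \<ge> 2 * 1" using e by (intro mult_mono) auto
      thus ?thesis unfolding s_def by simp
    qed
    have r1: "r > 1" unfolding r_def using k e by (simp add: less_divide_eq)
    have a0: "a > 0" and b0: "b > 0" unfolding a_def b_def using e fn fk by auto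
    have up: "\<forall>y\<ge>Y. g (s*y) \<ge> a * g y"
    proof (intro allI impI)
      fix y assume y: "y \<ge> Y"
      hence y1: "y \<ge> X1" "y \<ge> 1" unfolding Y_def by auto
      then obtain m :: nat where m: "m \<ge> 1" "y \<le> real m" "real m \<le> (1+\<epsilon>)*y"
        "g (real n * real m) \<ge> (1-\<epsilon>) * f n * g (real m)" using X1 by blast
      have "real n * real m \<le> s * y" unfolding s_def using m(3) mult_left_mono[OF m(3), of "real n"] by (simp add: mult.assoc)
      moreover have "real n * real m > 0" using n m by simp
      ultimately have "g (real n * real m) \<le> g (s*y)" using gmono by blast
      moreover have "g y \<le> g (real m)" using gmono y1 m by auto
      hence "a * g y \<le> a * g (real m)" using a0 by (intro mult_left_mono) auto
      ultimately show "g (s*y) \<ge> a * g y" using m(4) unfolding a_def by linarith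
    qed
    have dn: "\<forall>y\<ge>Y. g (r*y) \<le> b * g y"
    proof (intro allI impI)
      fix y assume y: "y \<ge> Y"
      define x where "x = y / (1+\<epsilon>)"
      have "y \<ge> (1+\<epsilon>) * max X2 1" using y unfolding Y_def by auto
      moreover have "(1+\<epsilon>)*X2 \<le> (1+\<epsilon>) * max X2 1" "(1+\<epsilon>)*1 \<le> (1+\<epsilon>) * max X2 1"
        using e by (intro mult_left_mono; simp)+
      ultimately have "(1+\<epsilon>)*X2 \<le> y" "(1+\<epsilon>)*1 \<le> y" by linarith+
      hence x1: "x \<ge> X2" "x \<ge> 1" unfolding x_def using e by (auto simp: le_divide_eq mult.commute)
      then obtain m :: nat where m: "m \<ge> 1" "x \<le> real m" "real m \<le> (1+\<epsilon>)*x"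
        "g (real k * real m) \<le> (1+\<epsilon>) * f k * g (real m)" using X2 by blast
      have yx: "y = (1+\<epsilon>)*x" unfolding x_def using e by simp
      have rx: "r * y = real k * x" unfolding r_def yx using e by simp
      have "real k * x \<le> real k * real m" using m(2) by (intro mult_left_mono) auto
      moreover have "real k * x > 0" using k x1 by simp
      ultimately have "g (r*y) \<le> g (real k * real m)" unfolding rx using gmono by blast
      moreover have "g (real m) \<le> g y" using gmono m yx by auto
      hence "b * g (real m) \<le> b * g y" using b0 by (intro mult_left_mono) auto
      ultimately show "g (r*y) \<le> b * g y" using m(4) unfolding b_def by linarith
    qed
    have lns: "ln s > 0" and lnr: "ln r > 0" using s1 r1 by auto
    have cmp: "\<exists>K::nat. \<bar>real K * ln s - real J * ln r\<bar> \<le> ln s \<and> g (s^K * Y) \<le> 1 * g (r^J * Y)" for J :: nat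
    proof -
      define t where "t = real J * ln r / ln s"
      have t0: "t \<ge> 0" unfolding t_def using lns lnr by simp
      have tl: "t * ln s = real J * ln r" unfolding t_def using lns by simp
      define K where "K = nat \<lfloor>t\<rfloor>"
      have K1: "real K * ln s \<le> real J * ln r" "real J * ln r < real K * ln s + ln s"
        using floor_facts[OF t0 lns] unfolding K_def tl by auto
      have "ln (s^K) \<le> ln (r^J)" using K1 s1 r1 by (simp add: ln_realpow)
      hence "s^K \<le> r^J" using s1 r1 by simp
      hence "s^K * Y \<le> r^J * Y" using Y1 by simp
      moreover have "s^K * Y > 0" using s1 Y1 by simp
      ultimately have "g (s^K * Y) \<le> g (r^J * Y)" using gmono by blast
      moreover have "\<bar>real K * ln s - real J * ln r\<bar> \<le> ln s" using K1 by linarith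
      ultimately show ?thesis by auto
    qed
    have "ln a / ln s \<le> ln b / ln r"
      by (rule chain_compare[OF _ gpos s1 r1 a0 b0 _ up dn cmp]) (use Y1 in auto)
    thus ?thesis unfolding a_def b_def s_def r_def .
  qed
  show ?thesis
  proof (rule limit_le[of "1/2", OF _ key])
    have ln0: "ln (real n) \<noteq> 0" "ln (real k) \<noteq> 0" using n k by auto
    show "((\<lambda>\<epsilon>. ln ((1-\<epsilon>) * f n) / ln (real n * (1+\<epsilon>))) \<longlongrightarrow> ln (f n) / ln (real n)) (at_right 0)"
    proof -
      have "((\<lambda>\<epsilon>. ln ((1-\<epsilon>) * f n) / ln (real n * (1+\<epsilon>))) \<longlongrightarrow> ln ((1-0) * f n) / ln (real n * (1+0))) (at_right 0)"
        using fn ln0 n by (intro tendsto_intros) auto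
      thus ?thesis by simp
    qed
    show "((\<lambda>\<epsilon>. ln ((1+\<epsilon>) * f k) / ln (real k / (1+\<epsilon>))) \<longlongrightarrow> ln (f k) / ln (real k)) (at_right 0)"
    proof -
      have "((\<lambda>\<epsilon>. ln ((1+\<epsilon>) * f k) / ln (real k / (1+\<epsilon>))) \<longlongrightarrow> ln ((1+0) * f k) / ln (real k / (1+0))) (at_right 0)"
        using fk ln0 k by (intro tendsto_intros) auto
      thus ?thesis by simp
    qed
  qed auto
qed


lemma ceil_facts:
  assumes "t \<ge> 0" "L > 0"
  shows "t * L \<le> real (nat \<lceil>t\<rceil>) * L" "real (nat \<lceil>t\<rceil>) * L < t * L + L"
proof -
  have a: "real (nat \<lceil>t\<rceil>) = of_int \<lceil>t\<rceil>" using assms by simp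
  have b: "t \<le> of_int \<lceil>t\<rceil>" "of_int \<lceil>t\<rceil> < t + 1" by linarith+
  show "t * L \<le> real (nat \<lceil>t\<rceil>) * L" unfolding a using b(1) assms by (intro mult_right_mono) auto
  have "of_int \<lceil>t\<rceil> * L < (t + 1) * L" using b(2) assms by (intro mult_strict_right_mono) auto
  thus "real (nat \<lceil>t\<rceil>) * L < t * L + L" unfolding a by (simp add: distrib_right)
qed

lemma case_anti:
  assumes gm: "antimono_on {0<..} g" and n: "n \<ge> 2" and k: "k \<ge> 2"
  shows "ln (f n) / ln (real n) \<le> ln (f k) / ln (real k)"
proof -
  have ganti: "g y \<le> g x" if "0 < x" "x \<le> y" for x y
    using monotone_onD[OF gm] that by auto
  have fn: "f n > 0" and fk: "f k > 0" using fpos n k by auto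
  have key: "ln ((1-\<epsilon>) * f n) / ln (real n / (1+\<epsilon>)) \<le> ln ((1+\<epsilon>) * f k) / ln (real k * (1+\<epsilon>))"
    if e: "0 < \<epsilon>" "\<epsilon> < 1/2" for \<epsilon>
  proof -
    obtain X1 where X1: "\<And>x. x \<ge> X1 \<Longrightarrow> \<exists>m::nat. m \<ge> 1 \<and> x \<le> real m \<and> real m \<le> (1+\<epsilon>)*x \<and>
            g (real n * real m) \<ge> (1-\<epsilon>) * f n * g (real m)"
      using Kboth(1)[OF fpos gpos normal wsm wsm_inv _ e, of n] n by auto
    obtain X2 where X2: "\<And>x. x \<ge> X2 \<Longrightarrow> \<exists>m::nat. m \<ge> 1 \<and> x \<le> real m \<and> real m \<le> (1+\<epsilon>)*x \<and>
            g (real k * real m) \<le> (1+\<epsilon>) * f k * g (real m)"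
      using Kboth(2)[OF fpos gpos normal wsm wsm_inv _ e, of k] k by auto
    define s where "s = real n / (1+\<epsilon>)"
    define r where "r = real k * (1+\<epsilon>)"
    define a where "a = (1-\<epsilon>) * f n"
    define b where "b = (1+\<epsilon>) * f k"
    define Y where "Y = max (max X2 1) ((1+\<epsilon>) * max X1 1)"
    have Y1: "Y \<ge> 1" unfolding Y_def by simp
    have r1: "r > 1"
    proof -
      have "real k \<ge> 2" using k by simp
      hence "real k * (1+\<epsilon>) \<ge> 2 * 1" using e by (intro mult_mono) auto
      thus ?thesis unfolding r_def by simp
    qed
    have s1: "s > 1" unfolding s_def using n e by (simp add: less_divide_eq)
    have a0: "a > 0" and b0: "b > 0" unfolding a_def b_def using e fn fk by auto
    have up: "\<forall>y\<ge>Y. g (s*y) \<ge> a * g y"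
    proof (intro allI impI)
      fix y assume y: "y \<ge> Y"
      define x where "x = y / (1+\<epsilon>)"
      have "y \<ge> (1+\<epsilon>) * max X1 1" using y unfolding Y_def by auto
      moreover have "(1+\<epsilon>)*X1 \<le> (1+\<epsilon>) * max X1 1" "(1+\<epsilon>)*1 \<le> (1+\<epsilon>) * max X1 1"
        using e by (intro mult_left_mono; simp)+
      ultimately have "(1+\<epsilon>)*X1 \<le> y" "(1+\<epsilon>)*1 \<le> y" by linarith+
      hence x1: "x \<ge> X1" "x \<ge> 1" unfolding x_def using e by (auto simp: le_divide_eq mult.commute)
      then obtain m :: nat where m: "m \<ge> 1" "x \<le> real m" "real m \<le> (1+\<epsilon>)*x"
        "g (real n * real m) \<ge> (1-\<epsilon>) * f n * g (real m)" using X1 by blast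
      have yx: "y = (1+\<epsilon>)*x" unfolding x_def using e by simp
      have sx: "s * y = real n * x" unfolding s_def yx using e by simp
      have "real n * x \<le> real n * real m" using m(2) by (intro mult_left_mono) auto
      moreover have "real n * x > 0" using n x1 by simp
      ultimately have "g (real n * real m) \<le> g (s*y)" unfolding sx using ganti by blast
      moreover have "g y \<le> g (real m)" using ganti m yx by auto
      hence "a * g y \<le> a * g (real m)" using a0 by (intro mult_left_mono) auto
      ultimately show "g (s*y) \<ge> a * g y" using m(4) unfolding a_def by linarith
    qed
    have dn: "\<forall>y\<ge>Y. g (r*y) \<le> b * g y"
    proof (intro allI impI)
      fix y assume y: "y \<ge> Y"
      hence y1: "y \<ge> X2" "y \<ge> 1" unfolding Y_def by auto
      then obtain m :: nat where m: "m \<ge> 1" "y \<le> real m" "real m \<le> (1+\<epsilon>)*y"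
        "g (real k * real m) \<le> (1+\<epsilon>) * f k * g (real m)" using X2 by blast
      have "real k * real m \<le> r * y" unfolding r_def using mult_left_mono[OF m(3), of "real k"] by (simp add: mult.assoc)
      moreover have "real k * real m > 0" using k m by simp
      ultimately have "g (r*y) \<le> g (real k * real m)" using ganti by blast
      moreover have "g (real m) \<le> g y" using ganti y1 m by auto
      hence "b * g (real m) \<le> b * g y" using b0 by (intro mult_left_mono) auto
      ultimately show "g (r*y) \<le> b * g y" using m(4) unfolding b_def by linarith
    qed
    have lns: "ln s > 0" and lnr: "ln r > 0" using s1 r1 by auto
    have cmp: "\<exists>K::nat. \<bar>real K * ln s - real J * ln r\<bar> \<le> ln s \<and> g (s^K * Y) \<le> 1 * g (r^J * Y)" for J :: nat
    proof -
      define t where "t = real J * ln r / ln s"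
      have t0: "t \<ge> 0" unfolding t_def using lns lnr by simp
      have tl: "t * ln s = real J * ln r" unfolding t_def using lns by simp
      define K where "K = nat \<lceil>t\<rceil>"
      have K1: "real J * ln r \<le> real K * ln s" "real K * ln s < real J * ln r + ln s"
        using ceil_facts[OF t0 lns] unfolding K_def tl by auto
      have "ln (r^J) \<le> ln (s^K)" using K1 s1 r1 by (simp add: ln_realpow)
      hence "r^J \<le> s^K" using s1 r1 by simp
      hence "r^J * Y \<le> s^K * Y" using Y1 by simp
      moreover have "r^J * Y > 0" using r1 Y1 by simp
      ultimately have "g (s^K * Y) \<le> g (r^J * Y)" using ganti by blast
      moreover have "\<bar>real K * ln s - real J * ln r\<bar> \<le> ln s" using K1 by linarith
      ultimately show ?thesis by auto
    qed
    have "ln a / ln s \<le> ln b / ln r"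
      by (rule chain_compare[OF _ gpos s1 r1 a0 b0 _ up dn cmp]) (use Y1 in auto)
    thus ?thesis unfolding a_def b_def s_def r_def .
  qed
  show ?thesis
  proof (rule limit_le[of "1/2", OF _ key])
    have ln0: "ln (real n) \<noteq> 0" "ln (real k) \<noteq> 0" using n k by auto
    show "((\<lambda>\<epsilon>. ln ((1-\<epsilon>) * f n) / ln (real n / (1+\<epsilon>))) \<longlongrightarrow> ln (f n) / ln (real n)) (at_right 0)"
    proof -
      have "((\<lambda>\<epsilon>. ln ((1-\<epsilon>) * f n) / ln (real n / (1+\<epsilon>))) \<longlongrightarrow> ln ((1-0) * f n) / ln (real n / (1+0))) (at_right 0)"
        using fn ln0 n by (intro tendsto_intros) auto
      thus ?thesis by simp
    qed
    show "((\<lambda>\<epsilon>. ln ((1+\<epsilon>) * f k) / ln (real k * (1+\<epsilon>))) \<longlongrightarrow> ln (f k) / ln (real k)) (at_right 0)"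
    proof -
      have "((\<lambda>\<epsilon>. ln ((1+\<epsilon>) * f k) / ln (real k * (1+\<epsilon>))) \<longlongrightarrow> ln ((1+0) * f k) / ln (real k * (1+0))) (at_right 0)"
        using fk ln0 k by (intro tendsto_intros) auto
      thus ?thesis by simp
    qed
  qed auto
qed


lemma case_uc:
  assumes uc: "log_unif_cont g" and n: "n \<ge> 2" and k: "k \<ge> 2"
  shows "ln (f n) / ln (real n) \<le> ln (f k) / ln (real k)"
proof -
  have fn: "f n > 0" and fk: "f k > 0" using fpos n k by auto
  obtain M where M: "M > 0" and Mh: "\<And>l y. 1 \<le> l \<Longrightarrow> l \<le> real n \<Longrightarrow> y > 0 \<Longrightarrow> g y \<le> M * g (l * y)"
    using uc_bound[OF uc gpos, of "real n"] by blast
  have key: "ln ((1-\<eta>)^2/(1+\<eta>) * f n) / ln (real n) \<le> ln ((1+\<eta>)^2/(1-\<eta>) * f k) / ln (real k)"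
    if et: "0 < \<eta>" "\<eta> < 1/2" for \<eta>
  proof -
    obtain \<delta> where d: "\<delta> > 0" and dh: "\<And>x y. x > 0 \<Longrightarrow> y > 0 \<Longrightarrow> \<bar>x / y - 1\<bar> < \<delta> \<Longrightarrow> \<bar>g x / g y - 1\<bar> < \<eta>"
      using uc et unfolding log_unif_cont_def by blast
    define \<epsilon> where "\<epsilon> = min (\<delta>/2) \<eta>"
    have e: "0 < \<epsilon>" "\<epsilon> < 1/2" and e2: "\<epsilon> \<le> \<eta>" "\<epsilon> < \<delta>" using d et unfolding \<epsilon>_def by auto
    obtain X1 where X1: "\<And>x. x \<ge> X1 \<Longrightarrow> \<exists>m::nat. m \<ge> 1 \<and> x \<le> real m \<and> real m \<le> (1+\<epsilon>)*x \<and>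
            g (real n * real m) \<ge> (1-\<epsilon>) * f n * g (real m)"
      using Kboth(1)[OF fpos gpos normal wsm wsm_inv _ e, of n] n by auto
    obtain X2 where X2: "\<And>x. x \<ge> X2 \<Longrightarrow> \<exists>m::nat. m \<ge> 1 \<and> x \<le> real m \<and> real m \<le> (1+\<epsilon>)*x \<and>
            g (real k * real m) \<le> (1+\<epsilon>) * f k * g (real m)"
      using Kboth(2)[OF fpos gpos normal wsm wsm_inv _ e, of k] k by auto
    have close: "\<bar>g (c * m) / g (c * y) - 1\<bar> < \<eta>" if "y > 0" "y \<le> m" "m \<le> (1+\<epsilon>)*y" "c > 0" for c m y :: real
    proof -
      have "(c*m)/(c*y) = m / y" using that by simp
      moreover have "m / y - 1 \<le> \<epsilon>" using that by (simp add: divide_le_eq algebra_simps)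
      moreover have "m / y - 1 \<ge> 0" using that by (simp add: le_divide_eq)
      ultimately have "\<bar>(c*m)/(c*y) - 1\<bar> < \<delta>" using e2 by simp
      moreover have "c * m > 0" "c * y > 0" using that by auto
      ultimately show ?thesis using dh by blast
    qed
    define a where "a = (1-\<eta>)^2/(1+\<eta>) * f n"
    define b where "b = (1+\<eta>)^2/(1-\<eta>) * f k"
    define Y where "Y = max (max X1 X2) 1"
    have Y1: "Y \<ge> 1" unfolding Y_def by simp
    have s1: "real n > 1" and r1: "real k > 1" using n k by auto
    have a0: "a > 0" and b0: "b > 0" unfolding a_def b_def using et fn fk by auto
    have up: "\<forall>y\<ge>Y. g (real n * y) \<ge> a * g y"
    proof (intro allI impI)
      fix y assume y: "y \<ge> Y"
      hence y1: "y \<ge> X1" "y \<ge> 1" unfolding Y_def by auto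
      then obtain m :: nat where m: "m \<ge> 1" "y \<le> real m" "real m \<le> (1+\<epsilon>)*y"
        "g (real n * real m) \<ge> (1-\<epsilon>) * f n * g (real m)" using X1 by blast
      have gy: "g y > 0" and gny: "g (real n * y) > 0" using gpos y1 n by auto
      have c1: "\<bar>g (1 * real m) / g (1 * y) - 1\<bar> < \<eta>" using close[of y "real m" 1] y1 m by auto
      have c2: "\<bar>g (real n * real m) / g (real n * y) - 1\<bar> < \<eta>" using close[of y "real m" "real n"] y1 m n by auto
      have h1: "g (real m) > (1-\<eta>) * g y" using c1 gy by (simp add: abs_less_iff field_simps)
      have h2: "g (real n * real m) < (1+\<eta>) * g (real n * y)" using c2 gny by (simp add: abs_less_iff field_simps)
      have "(1-\<eta>) * f n * g (real m) \<le> (1-\<epsilon>) * f n * g (real m)"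
        using e2 fn gpos m by (intro mult_right_mono) (auto intro: less_imp_le)
      moreover have "(1-\<eta>) * f n * ((1-\<eta>) * g y) \<le> (1-\<eta>) * f n * g (real m)"
        using h1 et fn by (intro mult_left_mono) auto
      ultimately have "(1-\<eta>)^2 * f n * g y < (1+\<eta>) * g (real n * y)"
        using h2 m(4) by (simp add: power2_eq_square mult_ac)
      hence "(1-\<eta>)^2 * f n * g y / (1+\<eta>) < g (real n * y)" using et by (simp add: divide_less_eq mult.commute)
      thus "g (real n * y) \<ge> a * g y" unfolding a_def by (simp add: mult_ac)
    qed
    have dn: "\<forall>y\<ge>Y. g (real k * y) \<le> b * g y"
    proof (intro allI impI)
      fix y assume y: "y \<ge> Y"
      hence y1: "y \<ge> X2" "y \<ge> 1" unfolding Y_def by auto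
      then obtain m :: nat where m: "m \<ge> 1" "y \<le> real m" "real m \<le> (1+\<epsilon>)*y"
        "g (real k * real m) \<le> (1+\<epsilon>) * f k * g (real m)" using X2 by blast
      have gy: "g y > 0" and gky: "g (real k * y) > 0" and gm: "g (real m) > 0" using gpos y1 k m by auto
      have c1: "\<bar>g (1 * real m) / g (1 * y) - 1\<bar> < \<eta>" using close[of y "real m" 1] y1 m by auto
      have c2: "\<bar>g (real k * real m) / g (real k * y) - 1\<bar> < \<eta>" using close[of y "real m" "real k"] y1 m k by auto
      have h1: "g (real m) < (1+\<eta>) * g y" using c1 gy by (simp add: abs_less_iff field_simps)
      have h2: "g (real k * real m) > (1-\<eta>) * g (real k * y)" using c2 gky by (simp add: abs_less_iff field_simps)
      have "(1+\<epsilon>) * f k * g (real m) \<le> (1+\<eta>) * f k * g (real m)"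
        using e2 fk gm by (intro mult_right_mono) auto
      moreover have "(1+\<eta>) * f k * g (real m) \<le> (1+\<eta>) * f k * ((1+\<eta>) * g y)"
        using h1 et fk by (intro mult_left_mono) auto
      ultimately have "(1-\<eta>) * g (real k * y) < (1+\<eta>)^2 * f k * g y"
        using h2 m(4) by (simp add: power2_eq_square mult_ac)
      hence "g (real k * y) < (1+\<eta>)^2 * f k * g y / (1-\<eta>)" using et by (simp add: less_divide_eq mult.commute)
      thus "g (real k * y) \<le> b * g y" unfolding b_def by (simp add: mult_ac)
    qed
    have lns: "ln (real n) > 0" and lnr: "ln (real k) > 0" using s1 r1 by auto
    have cmp: "\<exists>K::nat. \<bar>real K * ln (real n) - real J * ln (real k)\<bar> \<le> ln (real n) \<and>
                 g (real n^K * Y) \<le> M * g (real k^J * Y)" for J :: nat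
    proof -
      define t where "t = real J * ln (real k) / ln (real n)"
      have t0: "t \<ge> 0" unfolding t_def using lns lnr by simp
      have tl: "t * ln (real n) = real J * ln (real k)" unfolding t_def using lns by simp
      define K where "K = nat \<lfloor>t\<rfloor>"
      have K1: "real K * ln (real n) \<le> real J * ln (real k)" "real J * ln (real k) < real K * ln (real n) + ln (real n)"
        using floor_facts[OF t0 lns] unfolding K_def tl by auto
      have "ln (real n^K) \<le> ln (real k^J)" using K1 s1 r1 by (simp add: ln_realpow)
      hence l1: "real n^K \<le> real k^J" using s1 r1 by simp
      have lnS: "ln (real n^Suc K) = real (Suc K) * ln (real n)" using s1 by (intro ln_realpow)
      have "ln (real k^J) = real J * ln (real k)" using r1 by (intro ln_realpow)
      hence "ln (real k^J) < ln (real n^Suc K)" using K1 unfolding lnS by (simp add: algebra_simps)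
      hence l2: "real k^J < real n^Suc K" using s1 r1 by simp
      define l where "l = real k^J / real n^K"
      have nK: "real n^K > 0" using s1 by simp
      have "1 \<le> l" unfolding l_def using l1 nK by simp
      moreover have "l \<le> real n" unfolding l_def using l2 nK by (simp add: divide_le_eq mult.commute)
      moreover have "real n^K * Y > 0" using nK Y1 by simp
      ultimately have "g (real n^K * Y) \<le> M * g (l * (real n^K * Y))" using Mh by blast
      moreover have "l * (real n^K * Y) = real k^J * Y"
      proof -
        have "l * real n^K = real k^J" unfolding l_def using nK by simp
        thus ?thesis by (metis mult.assoc)
      qed
      moreover have "\<bar>real K * ln (real n) - real J * ln (real k)\<bar> \<le> ln (real n)" using K1 by linarith
      ultimately show ?thesis by auto
    qed
    have "ln a / ln (real n) \<le> ln b / ln (real k)"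
      by (rule chain_compare[OF _ gpos s1 r1 a0 b0 M up dn cmp]) (use Y1 in auto)
    thus ?thesis unfolding a_def b_def .
  qed
  show ?thesis
  proof (rule limit_le[of "1/2", OF _ key])
    have ln0: "ln (real n) \<noteq> 0" "ln (real k) \<noteq> 0" using n k by auto
    show "((\<lambda>\<eta>. ln ((1-\<eta>)^2/(1+\<eta>) * f n) / ln (real n)) \<longlongrightarrow> ln (f n) / ln (real n)) (at_right 0)"
    proof -
      have "((\<lambda>\<eta>. ln ((1-\<eta>)^2/(1+\<eta>) * f n) / ln (real n)) \<longlongrightarrow> ln ((1-0)^2/(1+0) * f n) / ln (real n)) (at_right 0)"
        using fn ln0 n by (intro tendsto_intros) auto
      thus ?thesis by simp
    qed
    show "((\<lambda>\<eta>. ln ((1+\<eta>)^2/(1-\<eta>) * f k) / ln (real k)) \<longlongrightarrow> ln (f k) / ln (real k)) (at_right 0)"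
    proof -
      have "((\<lambda>\<eta>. ln ((1+\<eta>)^2/(1-\<eta>) * f k) / ln (real k)) \<longlongrightarrow> ln ((1+0)^2/(1-0) * f k) / ln (real k)) (at_right 0)"
        using fk ln0 k by (intro tendsto_intros) auto
      thus ?thesis by simp
    qed
  qed auto
qed


lemma dens_empty: "\<eta> > 0 \<Longrightarrow> eventually (\<lambda>N. real (card (({}::nat set) \<inter> {1..N})) < \<eta> * real N) sequentially"
  using eventually_ge_at_top[of "1::nat"] by (rule eventually_mono) simp

lemma f1: "f 1 = 1"
proof -
  have f1p: "f 1 > 0" using fpos by auto
  have "f 1 \<le> 1"
  proof (rule ccontr)
    assume "\<not> f 1 \<le> 1"
    hence h: "f 1 > 1" by simp
    define \<theta> where "\<theta> = (f 1 - 1) / (2 * f 1)"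
    have th: "\<theta> > 0" unfolding \<theta>_def using h by simp
    obtain X0 where X0: "\<forall>x \<ge> X0. \<exists>m::nat. m \<ge> 1 \<and> x \<le> real m \<and> real m \<le> (1+\<theta>) * x \<and>
            f (1*m) \<ge> (1-\<theta>) * f 1 * f m \<and> m \<notin> {} \<and> 1*m \<notin> {}"
      using exists_good[OF wsm _ th dens_empty] by blast
    from X0[rule_format, OF order_refl] obtain m :: nat where m: "m \<ge> 1" "f (1*m) \<ge> (1-\<theta>) * f 1 * f m"
      by blast
    have fm: "f m > 0" using fpos m by auto
    have "((1-\<theta>) * f 1) * f m \<le> 1 * f m" using m(2) by simp
    hence "1 \<ge> (1-\<theta>) * f 1" using fm by (simp only: mult_le_cancel_right)
    moreover have "(1-\<theta>) * f 1 = f 1 / 2 + 1/2" unfolding \<theta>_def using f1p by (simp add: field_simps)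
    ultimately show False using h by linarith
  qed
  moreover have "f 1 \<ge> 1"
  proof (rule ccontr)
    assume "\<not> f 1 \<ge> 1"
    hence h: "f 1 < 1" by simp
    define \<theta> where "\<theta> = (1 - f 1) / 2"
    have th: "\<theta> > 0" unfolding \<theta>_def using h by simp
    obtain X0 where X0: "\<forall>x \<ge> X0. \<exists>m::nat. m \<ge> 1 \<and> x \<le> real m \<and> real m \<le> (1+\<theta>) * x \<and>
            1 / f (1*m) \<ge> (1-\<theta>) * (1 / f 1) * (1 / f m) \<and> m \<notin> {} \<and> 1*m \<notin> {}"
      using exists_good[OF wsm_inv _ th dens_empty] by blast
    from X0[rule_format, OF order_refl] obtain m :: nat where m: "m \<ge> 1" "1 / f (1*m) \<ge> (1-\<theta>) * (1 / f 1) * (1 / f m)"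
      by blast
    have fm: "f m > 0" using fpos m by auto
    have "(1-\<theta>) / f 1 \<le> 1" 
    proof -
      have "((1-\<theta>) / f 1) * (1 / f m) \<le> 1 * (1 / f m)" using m(2) by simp
      moreover have "1 / f m > 0" using fm by simp
      ultimately show ?thesis by (simp only: mult_le_cancel_right)
    qed
    hence "1 - \<theta> \<le> f 1" using f1p by (simp add: divide_le_eq)
    moreover have "\<theta> = 1/2 - f 1 / 2" unfolding \<theta>_def by (simp add: diff_divide_distrib)
    ultimately show False using h by linarith
  qed
  ultimately show ?thesis by simp
qed

lemma ratio_le:
  assumes greg: "mono_on {0<..} g \<or> antimono_on {0<..} g \<or> log_unif_cont g"
    and "n \<ge> 2" "k \<ge> 2"
  shows "ln (f n) / ln (real n) \<le> ln (f k) / ln (real k)"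
proof -
  consider "mono_on {0<..} g" | "antimono_on {0<..} g" | "log_unif_cont g" using greg by blast
  thus ?thesis
  proof cases
    case 1 show ?thesis by (rule case_mono[OF 1 assms(2,3)])
  next
    case 2 show ?thesis by (rule case_anti[OF 2 assms(2,3)])
  next
    case 3 show ?thesis by (rule case_uc[OF 3 assms(2,3)])
  qed
qed

lemma main_concl:
  assumes greg: "mono_on {0<..} g \<or> antimono_on {0<..} g \<or> log_unif_cont g"
  shows "\<exists>c::real. \<forall>n::nat. n \<ge> 1 \<longrightarrow> f n = real n powr c"
proof (intro exI allI impI)
  fix n :: nat assume n: "n \<ge> 1"
  define c where "c = ln (f 2) / ln (real 2)"
  show "f n = real n powr (ln (f 2) / ln (real 2))"
  proof (cases "n = 1")
    case True thus ?thesis using f1 by simp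
  next
    case False
    hence n2: "n \<ge> 2" using n by simp
    have "ln (f n) / ln (real n) = c" unfolding c_def
      using ratio_le[OF greg n2, of 2] ratio_le[OF greg _ n2, of 2] by simp
    hence "ln (f n) = c * ln (real n)" using n2 by (simp add: divide_eq_eq)
    moreover have "f n > 0" using fpos n by auto
    ultimately have "f n = exp (c * ln (real n))" by (metis exp_ln)
    thus ?thesis unfolding c_def using n2 by (simp add: powr_def)
  qed
qed

end


theorem corollary2:
  fixes f :: "nat \<Rightarrow> real" and g :: "real \<Rightarrow> real"
  assumes fpos: "\<forall>n::nat. n \<ge> 1 \<longrightarrow> f n > 0"
    and wsm: "weakly_supermult f"
    and wsm_inv: "weakly_supermult (\<lambda>n. 1 / f n)"
    and gpos: "\<forall>x::real. x > 0 \<longrightarrow> g x > 0"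
    and normal: "has_normal_order f g"
    and greg: "mono_on {0<..} g \<or> antimono_on {0<..} g \<or> log_unif_cont g"
  shows "\<exists>c::real. \<forall>n::nat. n \<ge> 1 \<longrightarrow> f n = real n powr c"
  by (rule main_concl[OF fpos wsm wsm_inv gpos normal greg])

end
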